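(* Let $W:\mathbb R\to\mathbb R$ be odd and continuously differentiable with $W'(0)>0$ and $W(x)>0$ for all $x>0$. Let $g\ge0$ be a (sufficiently regular, sufficiently fast decaying) solution of $\partial_tg=\partial_x\big((W*g)g\big)$ on $[0,\infty)\times\mathbb R$, where $(W*g)(x)=\int_{\mathbb R}W(x-y)g(y)dy$, with $\operatorname{supp}g(0,\cdot)\subset[a,b]$. Then $\operatorname{supp}g(t,\cdot)\subset[a,b]$ for all $t>0$, and, with $m=\|g(0,\cdot)\|_1$ and $c$ defined by $mc=\int_{\mathbb R}xg(0,x)dx$, $$\lim_{t\to\infty}\int_{\mathbb R}h(x)g(t,x)\,dx=m\,h(c)$$ for every twice continuously differentiable $h:\mathbb R\to\mathbb R$. *)

theory Defs
  imports "HOL-Analysis.Analysis"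
begin

definition conv_W :: "(real \<Rightarrow> real) \<Rightarrow> (real \<Rightarrow> real) \<Rightarrow> real \<Rightarrow> real" where
  "conv_W W f x = integral UNIV (\<lambda>y. W (x - y) * f y)"

end

theory Submission
  imports Defs "HOL-Real_Asymp.Real_Asymp"
begin


lemma kappa_lemma:
  fixes W :: "real \<Rightarrow> real"
  assumes W_odd: "\<And>x. W (- x) = - W x"
    and W_diff: "\<And>x. W differentiable (at x)"
    and W'_pos: "deriv W 0 > 0"
    and W_pos: "\<And>x. x > 0 \<Longrightarrow> W x > 0"
    and L: "0 \<le> L"
  shows "\<exists>\<kappa>>0. \<forall>z. \<bar>z\<bar> \<le> L \<longrightarrow> \<kappa> * z\<^sup>2 \<le> z * W z"
proof -
  define D where "D = deriv W 0"
  have W0: "W 0 = 0" using W_odd[of 0] by simp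
  have dW: "(W has_real_derivative D) (at 0)"
    unfolding D_def using W_diff[of 0] by (simp add: DERIV_deriv_iff_real_differentiable)
  have Wc: "isCont W x" for x
    using W_diff[of x] by (simp add: differentiable_imp_continuous_within)
  define q where "q z = (if z = 0 then D else W z / z)" for z
  have lim0: "((\<lambda>y. W y / y) \<longlongrightarrow> D) (at 0)"
    using dW W0 by (simp add: has_field_derivative_iff)
  have qc: "isCont q z" for z
  proof (cases "z = 0")
    case True
    have "(q \<longlongrightarrow> D) (at 0)"
      by (rule tendsto_cong[THEN iffD1, OF _ lim0])
         (auto simp: q_def eventually_at_filter)
    then show ?thesis using True by (simp add: isCont_def q_def)
  next
    case False
    have "((\<lambda>y. W y / y) \<longlongrightarrow> W z / z) (at z)"
      using Wc[of z] False by (auto intro!: tendsto_intros simp: isCont_def)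
    moreover have "\<forall>\<^sub>F y in at z. W y / y = q y"
    proof -
      have "\<forall>\<^sub>F y in nhds z. y \<noteq> 0" using False by (simp add: eventually_nhds_in_open t1_space_nhds)
      then show ?thesis
        unfolding eventually_at_filter by (rule eventually_mono) (auto simp: q_def)
    qed
    ultimately have "(q \<longlongrightarrow> q z) (at z)"
      using False by (auto simp: q_def elim: tendsto_cong[THEN iffD1, rotated])
    then show ?thesis by (simp add: isCont_def)
  qed
  have qpos: "z \<ge> 0 \<Longrightarrow> q z > 0" for z
    using W_pos[of z] W'_pos by (auto simp: q_def D_def)
  obtain z0 where z0: "z0 \<in> {0..L}" "\<And>z. z \<in> {0..L} \<Longrightarrow> q z0 \<le> q z"
    using continuous_attains_inf[of "{0..L}" q] L qc
    by (auto simp: continuous_at_imp_continuous_on)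
  define \<kappa> where "\<kappa> = q z0"
  have kpos: "\<kappa> > 0" using qpos z0 by (auto simp: \<kappa>_def)
  have main: "\<kappa> * z\<^sup>2 \<le> z * W z" if "0 \<le> z" "z \<le> L" for z
  proof (cases "z = 0")
    case True then show ?thesis by simp
  next
    case False
    have "\<kappa> \<le> W z / z" using z0(2)[of z] that False by (auto simp: \<kappa>_def q_def)
    then have "\<kappa> * z\<^sup>2 \<le> W z / z * z\<^sup>2" using that by (intro mult_right_mono) auto
    also have "\<dots> = z * W z" using False by (simp add: power2_eq_square)
    finally show ?thesis .
  qed
  show ?thesis
  proof (intro exI[of _ \<kappa>] conjI allI impI kpos)
    fix z assume z: "\<bar>z\<bar> \<le> L"
    show "\<kappa> * z\<^sup>2 \<le> z * W z"
    proof (cases "z \<ge> 0")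
      case True then show ?thesis using main z by auto
    next
      case False
      then have "\<kappa> * (-z)\<^sup>2 \<le> (-z) * W (-z)" using main[of "-z"] z by auto
      then show ?thesis using W_odd[of z] by simp
    qed
  qed
qed



lemma taylor_bound:
  fixes h :: "real \<Rightarrow> real"
  assumes h1: "\<forall>x. h differentiable (at x)" and h2: "\<forall>x. deriv h differentiable (at x)"
    and h3: "continuous_on UNIV (deriv (deriv h))"
  shows "\<exists>M\<ge>0. \<forall>x\<in>{a..b}. \<forall>c\<in>{a..b}. \<bar>h x - h c - deriv h c * (x - c)\<bar> \<le> M * (x - c)\<^sup>2"
proof -
  have "bounded (deriv (deriv h) ` {a..b})"
    by (rule compact_imp_bounded, rule compact_continuous_image)
       (auto intro: continuous_on_subset[OF h3])
  then obtain M0 where M0: "\<And>s. s \<in> {a..b} \<Longrightarrow> \<bar>deriv (deriv h) s\<bar> \<le> M0"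
    unfolding bounded_real by (meson atLeastAtMost_iff image_eqI)
  define M where "M = max M0 0"
  have M: "\<And>s. s \<in> {a..b} \<Longrightarrow> \<bar>deriv (deriv h) s\<bar> \<le> M" "M \<ge> 0"
    using M0 by (force simp: M_def)+
  have dh: "(h has_real_derivative deriv h x) (at x within S)" for x S
    using h1 by (simp add: DERIV_deriv_iff_real_differentiable has_field_derivative_at_within)
  have ddh: "(deriv h has_real_derivative deriv (deriv h) x) (at x within S)" for x S
    using h2 by (simp add: DERIV_deriv_iff_real_differentiable has_field_derivative_at_within)
  have lip: "\<bar>deriv h s - deriv h c\<bar> \<le> M * \<bar>s - c\<bar>" if "s \<in> {a..b}" "c \<in> {a..b}" for s c
    using field_differentiable_bound[of "{a..b}" "deriv h" "deriv (deriv h)" M s c] that M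
    by (auto simp: ddh)
  show ?thesis
  proof (intro exI[of _ M] conjI ballI M(2))
    fix x c assume x: "x \<in> {a..b}" and c: "c \<in> {a..b}"
    define F where "F y = h y - h c - deriv h c * (y - c)" for y
    define S where "S = {min c x..max c x}"
    have SS: "S \<subseteq> {a..b}" using x c by (auto simp: S_def)
    have dF: "(F has_real_derivative deriv h y - deriv h c) (at y within S)" for y
      unfolding F_def[abs_def] by (auto intro!: derivative_eq_intros dh)
    have bF: "norm (deriv h y - deriv h c) \<le> M * \<bar>x - c\<bar>" if "y \<in> S" for y
    proof -
      have "\<bar>y - c\<bar> \<le> \<bar>x - c\<bar>" using that by (auto simp: S_def)
      then have "M * \<bar>y - c\<bar> \<le> M * \<bar>x - c\<bar>" using M(2) by (intro mult_left_mono) auto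
      then show ?thesis using lip[of y c] that SS c by auto
    qed
    have "norm (F x - F c) \<le> M * \<bar>x - c\<bar> * norm (x - c)"
      by (rule field_differentiable_bound[of S F _ "M * \<bar>x - c\<bar>"])
         (use dF bF in \<open>auto simp: S_def convex_real_interval\<close>)
    then show "\<bar>h x - h c - deriv h c * (x - c)\<bar> \<le> M * (x - c)\<^sup>2"
      by (simp add: F_def power2_eq_square abs_mult)
  qed
qed



lemma mono_lemma:
  fixes Q :: "real \<Rightarrow> real"
  assumes T: "0 \<le> T"
    and d: "\<And>t. t \<in> {0..T} \<Longrightarrow> (Q has_real_derivative Q' t) (at t within {0..T})"
    and n: "\<And>t. t \<in> {0..T} \<Longrightarrow> Q' t \<le> 0"
  shows "Q T \<le> Q 0"
proof (rule DERIV_nonpos_imp_decreasing_open[OF T])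
  show "continuous_on {0..T} Q"
    using d DERIV_continuous continuous_on_eq_continuous_within by blast
  fix x assume x: "0 < x" "x < T"
  have "at x within {0..T} = at x"
    by (rule at_within_interior) (use x in simp)
  then show "\<exists>y. (Q has_real_derivative y) (at x) \<and> y \<le> 0"
    using d[of x] n[of x] x by auto
qed

lemma sqpos_deriv: "((\<lambda>z::real. (max z 0)\<^sup>2) has_real_derivative 2 * max z 0) (at z)"
proof -
  consider "z > 0" | "z < 0" | "z = 0" by linarith
  then show ?thesis
  proof cases
    case 1
    have "((\<lambda>z::real. z\<^sup>2) has_real_derivative 2 * max z 0) (at z)"
      using 1 by (auto intro!: derivative_eq_intros)
    then show ?thesis
      by (rule has_field_derivative_transform_within_open[where S="{0<..}"]) (use 1 in auto)
  next
    case 2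
    have "((\<lambda>z::real. 0) has_real_derivative 2 * max z 0) (at z)" using 2 by simp
    then show ?thesis
      by (rule has_field_derivative_transform_within_open[where S="{..<0}"]) (use 2 in auto)
  next
    case 3
    have "((\<lambda>y. ((max y 0)\<^sup>2 - (max 0 0)\<^sup>2) / (y - 0)) \<longlongrightarrow> (0::real)) (at 0)"
    proof (rule Lim_null_comparison)
      show "\<forall>\<^sub>F x in at 0. norm (((max x 0)\<^sup>2 - (max 0 0)\<^sup>2) / (x - 0)) \<le> \<bar>x\<bar>"
        by (rule always_eventually) (auto simp: power2_eq_square abs_mult max_def)
      show "((\<lambda>x::real. \<bar>x\<bar>) \<longlongrightarrow> 0) (at 0)"
        using tendsto_rabs[OF tendsto_ident_at[of 0 UNIV]] by simp
    qed
    then show ?thesis using 3 by (simp add: has_field_derivative_iff)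
  qed
qed

lemma zero_int_imp_zero:
  fixes f :: "real \<Rightarrow> real"
  assumes "continuous_on {-R..R} f" "\<And>x. 0 \<le> f x" "integral {-R..R} f = 0" "R > 0" "\<bar>x\<bar> \<le> R"
  shows "f x = 0"
proof (rule has_integral_0_cbox_imp_0[of "-R" R f])
  show "continuous_on (cbox (- R) R) f" using assms by (simp add: cbox_interval)
  show "(f has_integral 0) (cbox (- R) R)"
    using assms integrable_continuous_real[OF assms(1)] by (metis cbox_interval integrable_integral)
qed (use assms in \<open>auto simp: cbox_interval\<close>)

lemma dbl_expand:
  fixes f :: "real \<Rightarrow> real"
  assumes fc: "continuous_on {-R..R} f"
  shows "integral {-R..R} (\<lambda>x. integral {-R..R} (\<lambda>y. (x - y)\<^sup>2 * (f x * f y)))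
     = 2 * integral {-R..R} f * integral {-R..R} (\<lambda>x. (x - c)\<^sup>2 * f x)
       - 2 * (integral {-R..R} (\<lambda>x. (x - c) * f x))\<^sup>2"
proof -
  define m where "m = integral {-R..R} f"
  define N where "N = integral {-R..R} (\<lambda>x. (x - c) * f x)"
  define I where "I = integral {-R..R} (\<lambda>x. (x - c)\<^sup>2 * f x)"
  have i1: "(\<lambda>y. k * f y) integrable_on {-R..R}" for k
    by (intro integrable_continuous_real continuous_intros fc)
  have i2: "(\<lambda>y. k * ((y - c) * f y)) integrable_on {-R..R}" for k
    by (intro integrable_continuous_real continuous_intros fc)
  have i3: "(\<lambda>y. k * ((y - c)\<^sup>2 * f y)) integrable_on {-R..R}" for k
    by (intro integrable_continuous_real continuous_intros fc)
  have inner: "integral {-R..R} (\<lambda>y. (x - y)\<^sup>2 * (f x * f y))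
      = ((x - c)\<^sup>2 * f x) * m - (2 * (x - c) * f x) * N + f x * I" for x
  proof -
    have "integral {-R..R} (\<lambda>y. (x - y)\<^sup>2 * (f x * f y))
      = integral {-R..R} (\<lambda>y. ((x - c)\<^sup>2 * f x) * f y - (2 * (x - c) * f x) * ((y - c) * f y)
            + f x * ((y - c)\<^sup>2 * f y))"
      by (rule integral_cong) (simp add: power2_eq_square algebra_simps)
    also have "\<dots> = integral {-R..R} (\<lambda>y. ((x - c)\<^sup>2 * f x) * f y - (2 * (x - c) * f x) * ((y - c) * f y))
            + integral {-R..R} (\<lambda>y. f x * ((y - c)\<^sup>2 * f y))"
      by (rule integral_add) (intro integrable_diff i1 i2, rule i3)
    also have "\<dots> = ((x - c)\<^sup>2 * f x) * m - (2 * (x - c) * f x) * N + f x * I"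
      by (subst integral_diff[OF i1 i2]) (simp add: m_def N_def I_def)
    finally show ?thesis .
  qed
  have j1: "(\<lambda>x. ((x - c)\<^sup>2 * f x) * k) integrable_on {-R..R}" for k
    by (intro integrable_continuous_real continuous_intros fc)
  have j2: "(\<lambda>x. (2 * (x - c) * f x) * k) integrable_on {-R..R}" for k
    by (intro integrable_continuous_real continuous_intros fc)
  have j3: "(\<lambda>x. f x * k) integrable_on {-R..R}" for k
    by (intro integrable_continuous_real continuous_intros fc)
  have "integral {-R..R} (\<lambda>x. integral {-R..R} (\<lambda>y. (x - y)\<^sup>2 * (f x * f y)))
      = integral {-R..R} (\<lambda>x. ((x - c)\<^sup>2 * f x) * m - (2 * (x - c) * f x) * N + f x * I)"
    by (simp only: inner)
  also have "\<dots> = integral {-R..R} (\<lambda>x. ((x - c)\<^sup>2 * f x) * m - (2 * (x - c) * f x) * N)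
      + integral {-R..R} (\<lambda>x. f x * I)"
    by (rule integral_add) (intro integrable_diff j1 j2, rule j3)
  also have "\<dots> = I * m - 2 * N * N + m * I"
  proof -
    have "(\<lambda>x. (2 * (x - c) * f x) * N) = (\<lambda>x. (2 * N) * ((x - c) * f x))"
      by (auto simp: algebra_simps)
    then show ?thesis
      by (subst integral_diff[OF j1 j2]) (simp add: m_def N_def I_def)
  qed
  finally show ?thesis by (simp add: m_def N_def I_def power2_eq_square algebra_simps)
qed

locale agg =
  fixes W :: "real \<Rightarrow> real" and g gt :: "real \<Rightarrow> real \<Rightarrow> real"
  assumes W_odd: "\<And>x. W (- x) = - W x"
    and W_cont: "continuous_on UNIV W"
    and W_pos: "\<And>x. x > 0 \<Longrightarrow> W x > 0"
    and g_nonneg: "\<And>t x. t \<ge> 0 \<Longrightarrow> g t x \<ge> 0"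
    and g_dt: "\<And>t x. t \<ge> 0 \<Longrightarrow> ((\<lambda>s. g s x) has_real_derivative gt t x) (at t within {0..})"
    and g_cont: "continuous_on ({0..} \<times> UNIV) (\<lambda>(t, x). g t x)"
    and gt_cont: "continuous_on ({0..} \<times> UNIV) (\<lambda>(t, x). gt t x)"
    and g_decay: "\<And>T. \<exists>R. \<forall>t x. 0 \<le> t \<and> t \<le> T \<and> \<bar>x\<bar> > R \<longrightarrow> g t x = 0"
    and pde: "\<And>t x. t \<ge> 0 \<Longrightarrow>
               ((\<lambda>y. conv_W W (g t) y * g t y) has_real_derivative gt t x) (at x)"
begin

lemma W_zero: "W 0 = 0"
  using W_odd[of 0] by simp

lemma W_swap: "W (y - x) = - W (x - y)"
  using W_odd[of "x - y"] by simp

lemma W_neg: "x < 0 \<Longrightarrow> W x < 0"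
  using W_pos[of "-x"] W_odd[of x] by simp

lemma W_sign: "0 \<le> z * W z"
proof (cases "z > 0")
  case True then show ?thesis using W_pos[of z] by simp
next
  case False
  then show ?thesis using W_neg[of z] W_zero
    by (cases "z = 0") (auto simp: mult_nonpos_nonpos)
qed

lemma decayR: "\<exists>R>0. \<forall>t x. 0 \<le> t \<and> t \<le> T \<and> \<bar>x\<bar> \<ge> R \<longrightarrow> g t x = 0"
proof -
  obtain R0 where R0: "\<forall>t x. 0 \<le> t \<and> t \<le> T \<and> \<bar>x\<bar> > R0 \<longrightarrow> g t x = 0"
    using g_decay by blast
  show ?thesis
    by (rule exI[of _ "\<bar>R0\<bar> + 1"]) (use R0 in auto)
qed

lemma g_cont_x: "t \<ge> 0 \<Longrightarrow> continuous_on S (g t)"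
proof -
  assume t: "t \<ge> 0"
  have "continuous_on UNIV ((\<lambda>(t, x). g t x) \<circ> (\<lambda>x. (t, x)))"
    by (rule continuous_on_compose[OF _ continuous_on_subset[OF g_cont]])
       (use t in \<open>auto intro!: continuous_intros\<close>)
  then show ?thesis by (auto simp: o_def intro: continuous_on_subset)
qed

lemma g_cont2: "continuous_on ({0..T} \<times> S) (\<lambda>(t, x). g t x)"
  by (rule continuous_on_subset[OF g_cont]) auto

lemma gt_cont2: "continuous_on ({0..T} \<times> S) (\<lambda>(t, x). gt t x)"
  by (rule continuous_on_subset[OF gt_cont]) auto

lemma int_UNIV:
  fixes f :: "real \<Rightarrow> real"
  assumes "continuous_on {-R..R} f" "\<And>x. \<bar>x\<bar> \<ge> R \<Longrightarrow> f x = 0"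
  shows "f integrable_on UNIV" "integral UNIV f = integral {-R..R} f"
proof -
  have "(f has_integral integral {-R..R} f) {-R..R}"
    using integrable_continuous_real[OF assms(1)] by blast
  then have "(f has_integral integral {-R..R} f) UNIV"
    by (rule has_integral_on_superset) (use assms(2) in auto)
  then show "f integrable_on UNIV" "integral UNIV f = integral {-R..R} f"
    by (auto simp: integral_unique)
qed

lemma conv_box:
  assumes "t \<ge> 0" "\<And>y. \<bar>y\<bar> \<ge> R \<Longrightarrow> g t y = 0"
  shows "conv_W W (g t) x = integral {-R..R} (\<lambda>y. W (x - y) * g t y)"
  unfolding conv_W_def
  by (rule int_UNIV(2)) (use assms in \<open>auto intro!: continuous_intros g_cont_x
       continuous_on_compose2[OF W_cont]\<close>)

lemma conv_cont:
  assumes "t \<ge> 0" "\<And>y. \<bar>y\<bar> \<ge> R \<Longrightarrow> g t y = 0"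
  shows "continuous_on S (conv_W W (g t))"
proof -
  have "continuous_on UNIV (\<lambda>x. integral (cbox (-R) R) (\<lambda>y. W (x - y) * g t y))"
    by (rule integral_continuous_on_param)
       (auto intro!: continuous_intros continuous_on_compose2[OF W_cont]
         continuous_on_compose2[OF g_cont_x[OF assms(1)]] simp: split_beta)
  then show ?thesis
    using conv_box[OF assms] by (auto simp: cbox_interval intro: continuous_on_subset)
qed

lemma W_cont_comp[continuous_intros]: "continuous_on S f \<Longrightarrow> continuous_on S (\<lambda>z. W (f z))"
  by (rule continuous_on_compose2[OF W_cont]) auto

lemma g_cont_comp: "t \<ge> 0 \<Longrightarrow> continuous_on S f \<Longrightarrow> continuous_on S (\<lambda>z. g t (f z))"
  by (rule continuous_on_compose2[OF g_cont_x[of t UNIV]]) auto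

lemma core:
  assumes T: "T \<ge> 0" and R: "\<forall>t x. 0 \<le> t \<and> t \<le> T \<and> \<bar>x\<bar> \<ge> R \<longrightarrow> g t x = 0" "R > 0"
    and phi: "\<And>x. (\<phi> has_real_derivative \<phi>' x) (at x)" and phic: "continuous_on UNIV \<phi>'"
    and t: "t \<in> {0..T}"
  shows "((\<lambda>s. integral {-R..R} (\<lambda>x. \<phi> x * g s x)) has_real_derivative
      -(1/2) * integral {-R..R} (\<lambda>x. integral {-R..R} (\<lambda>y. (\<phi>' x - \<phi>' y) * (W (x - y) * g t x * g t y))))
      (at t within {0..T})"
proof -
  have t0: "t \<ge> 0" using t by auto
  have phicont: "continuous_on S \<phi>" for S
    using phi by (meson DERIV_continuous continuous_at_imp_continuous_on)
  have phic': "continuous_on S f \<Longrightarrow> continuous_on S (\<lambda>z. \<phi>' (f z))" for S f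
    by (rule continuous_on_compose2[OF phic]) auto
  have phic2: "continuous_on S f \<Longrightarrow> continuous_on S (\<lambda>z. \<phi> (f z))" for S f
    by (rule continuous_on_compose2[OF phicont[of UNIV]]) auto
  note gc = g_cont_comp[OF t0]
  have gtc: "continuous_on ({0..T} \<times> S) (\<lambda>(s, x). \<phi> x * gt s x)" for S
  proof -
    have "continuous_on ({0..T} \<times> S) (\<lambda>p. \<phi> (snd p) * (\<lambda>(s, x). gt s x) p)"
      by (intro continuous_intros phic2 gt_cont2)
    then show ?thesis by (simp add: split_beta)
  qed
  have d1: "((\<lambda>s. integral {-R..R} (\<lambda>x. \<phi> x * g s x)) has_real_derivative
       integral {-R..R} (\<lambda>x. \<phi> x * gt t x)) (at t within {0..T})"
  proof -
    have "((\<lambda>s. integral (cbox (-R) R) (\<lambda>x. \<phi> x * g s x)) has_real_derivative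
       integral (cbox (-R) R) (\<lambda>x. \<phi> x * gt t x)) (at t within {0..T})"
    proof (rule leibniz_rule_field_derivative[where fx="\<lambda>s x. \<phi> x * gt s x"])
      fix s x assume s: "s \<in> {0..T}"
      show "((\<lambda>s. \<phi> x * g s x) has_real_derivative \<phi> x * gt s x) (at s within {0..T})"
        by (rule DERIV_cmult, rule DERIV_subset[OF g_dt]) (use s in auto)
    next
      fix s assume s: "s \<in> {0..T}"
      show "(\<lambda>x. \<phi> x * g s x) integrable_on cbox (- R) R"
        by (rule integrable_continuous) (use s in \<open>auto intro!: continuous_intros phicont g_cont_x\<close>)
    qed (use t gtc in \<open>auto simp: convex_real_interval\<close>)
    then show ?thesis by (simp add: cbox_interval)
  qed
  define Phi where "Phi x = conv_W W (g t) x * g t x" for x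
  have Rt: "\<And>y. \<bar>y\<bar> \<ge> R \<Longrightarrow> g t y = 0" using R t by auto
  have Phic: "continuous_on S Phi" for S
    unfolding Phi_def by (intro continuous_intros conv_cont[OF t0 Rt] g_cont_x t0)
  have Phi_end: "Phi R = 0" "Phi (-R) = 0" using Rt[of R] Rt[of "-R"] R by (auto simp: Phi_def)
  have "((\<lambda>x. gt t x * \<phi> x) has_integral - integral {-R..R} (\<lambda>x. Phi x * \<phi>' x)) {-R..R}"
  proof (rule integration_by_parts[OF bounded_bilinear_mult])
    show "-R \<le> R" using R by simp
    show "continuous_on {- R..R} Phi" by (rule Phic)
    show "continuous_on {- R..R} \<phi>" by (rule phicont)
    show "(Phi has_vector_derivative gt t x) (at x)" for x
      using pde[OF t0, of x] unfolding Phi_def has_real_derivative_iff_has_vector_derivative .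
    show "(\<phi> has_vector_derivative \<phi>' x) (at x)" for x
      using phi[of x] unfolding has_real_derivative_iff_has_vector_derivative .
    have "(\<lambda>x. Phi x * \<phi>' x) integrable_on {-R..R}"
      by (rule integrable_continuous_real) (intro continuous_intros Phic phic')
    then show "((\<lambda>x. Phi x * \<phi>' x) has_integral
          Phi R * \<phi> R - Phi (- R) * \<phi> (- R) - - integral {- R..R} (\<lambda>x. Phi x * \<phi>' x)) {- R..R}"
      using Phi_end by (simp add: integrable_integral)
  qed
  then have e2: "integral {-R..R} (\<lambda>x. \<phi> x * gt t x) = - integral {-R..R} (\<lambda>x. Phi x * \<phi>' x)"
    by (simp add: integral_unique mult.commute)
  define K where "K x y = W (x - y) * g t x * g t y" for x y
  have Kc: "continuous_on S (\<lambda>p. K (fst p) (snd p))" for S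
    unfolding K_def by (intro continuous_intros gc)
  have e3: "Phi x * \<phi>' x = integral {-R..R} (\<lambda>y. \<phi>' x * K x y)" for x
  proof -
    have "integral {-R..R} (\<lambda>y. \<phi>' x * K x y) = integral {-R..R} (\<lambda>y. W (x - y) * g t y * (\<phi>' x * g t x))"
      by (rule integral_cong) (simp add: K_def algebra_simps)
    also have "\<dots> = conv_W W (g t) x * (\<phi>' x * g t x)"
      by (simp add: conv_box[OF t0 Rt])
    finally show ?thesis by (metis Phi_def mult.assoc mult.commute)
  qed
  have cA: "continuous_on (cbox (-R, -R) (R, R)) (\<lambda>(x, y). \<phi>' x * K x y)"
    using continuous_on_mult[OF phic'[OF continuous_on_fst[OF continuous_on_id]] Kc]
    by (simp add: split_beta)
  have cB: "continuous_on (cbox (-R, -R) (R, R)) (\<lambda>(x, y). \<phi>' y * K x y)"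
    using continuous_on_mult[OF phic'[OF continuous_on_snd[OF continuous_on_id]] Kc]
    by (simp add: split_beta)
  have swap: "integral {-R..R} (\<lambda>x. integral {-R..R} (\<lambda>y. \<phi>' x * K x y))
      = - integral {-R..R} (\<lambda>x. integral {-R..R} (\<lambda>y. \<phi>' y * K x y))"
  proof -
    have "integral {-R..R} (\<lambda>x. integral {-R..R} (\<lambda>y. \<phi>' x * K x y))
       = integral {-R..R} (\<lambda>y. integral {-R..R} (\<lambda>x. \<phi>' x * K x y))"
      using integral_swap_continuous[OF cA] by (simp add: cbox_interval)
    also have "\<dots> = integral {-R..R} (\<lambda>x. integral {-R..R} (\<lambda>y. - (\<phi>' y * K x y)))"
    proof (intro integral_cong)
      fix x y show "\<phi>' y * K y x = - (\<phi>' y * K x y)"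
        using W_swap[of x y] by (simp add: K_def)
    qed
    finally show ?thesis by simp
  qed
  have icA: "continuous_on S (\<lambda>x. integral {-R..R} (\<lambda>y. \<phi>' x * K x y))" for S
  proof -
    have "continuous_on S (\<lambda>x. integral (cbox (-R) R) (\<lambda>y. \<phi>' x * K x y))"
      by (rule integral_continuous_on_param)
         (use continuous_on_mult[OF phic'[OF continuous_on_fst[OF continuous_on_id]] Kc] in
          \<open>simp add: split_beta\<close>)
    then show ?thesis by (simp add: cbox_interval)
  qed
  have icB: "continuous_on S (\<lambda>x. integral {-R..R} (\<lambda>y. \<phi>' y * K x y))" for S
  proof -
    have "continuous_on S (\<lambda>x. integral (cbox (-R) R) (\<lambda>y. \<phi>' y * K x y))"
      by (rule integral_continuous_on_param)
         (use continuous_on_mult[OF phic'[OF continuous_on_snd[OF continuous_on_id]] Kc] in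
          \<open>simp add: split_beta\<close>)
    then show ?thesis by (simp add: cbox_interval)
  qed
  have "integral {-R..R} (\<lambda>x. integral {-R..R} (\<lambda>y. (\<phi>' x - \<phi>' y) * K x y))
     = integral {-R..R} (\<lambda>x. integral {-R..R} (\<lambda>y. \<phi>' x * K x y) - integral {-R..R} (\<lambda>y. \<phi>' y * K x y))"
  proof (rule integral_cong)
    fix x
    have "integral {-R..R} (\<lambda>y. (\<phi>' x - \<phi>' y) * K x y) = integral {-R..R} (\<lambda>y. \<phi>' x * K x y - \<phi>' y * K x y)"
      by (simp add: algebra_simps)
    also have "\<dots> = integral {-R..R} (\<lambda>y. \<phi>' x * K x y) - integral {-R..R} (\<lambda>y. \<phi>' y * K x y)"
      by (rule integral_diff; rule integrable_continuous_real; unfold K_def; intro continuous_intros gc phic')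
    finally show "integral {-R..R} (\<lambda>y. (\<phi>' x - \<phi>' y) * K x y) = \<dots>" .
  qed
  also have "\<dots> = integral {-R..R} (\<lambda>x. integral {-R..R} (\<lambda>y. \<phi>' x * K x y)) - integral {-R..R} (\<lambda>x. integral {-R..R} (\<lambda>y. \<phi>' y * K x y))"
    by (rule integral_diff; rule integrable_continuous_real) (rule icA, rule icB)
  also have "\<dots> = 2 * integral {-R..R} (\<lambda>x. integral {-R..R} (\<lambda>y. \<phi>' x * K x y))"
    using swap by simp
  also have "\<dots> = 2 * integral {-R..R} (\<lambda>x. Phi x * \<phi>' x)"
    by (simp only: e3)
  finally have e4: "integral {-R..R} (\<lambda>x. Phi x * \<phi>' x) = (1/2) * integral {-R..R} (\<lambda>x. integral {-R..R} (\<lambda>y. (\<phi>' x - \<phi>' y) * K x y))"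
    by simp
  show ?thesis
    using d1 unfolding e2 e4 K_def by simp
qed

lemma M_box:
  assumes "0 \<le> t" "t \<le> T" "\<forall>t x. 0 \<le> t \<and> t \<le> T \<and> \<bar>x\<bar> \<ge> R \<longrightarrow> g t x = 0"
    and "continuous_on UNIV \<phi>"
  shows "integral UNIV (\<lambda>x. \<phi> x * g t x) = integral {-R..R} (\<lambda>x. \<phi> x * g t x)"
  by (rule int_UNIV(2)) (use assms in \<open>auto intro!: continuous_intros g_cont_x intro: continuous_on_subset\<close>)

lemma D_nonneg:
  assumes "mono \<phi>'" "t \<ge> 0" and phic: "continuous_on UNIV \<phi>'"
  shows "0 \<le> integral {-R..R} (\<lambda>x. integral {-R..R} (\<lambda>y. (\<phi>' x - \<phi>' y) * (W (x - y) * g t x * g t y)))"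
proof (rule integral_nonneg)
  have phic': "continuous_on S f \<Longrightarrow> continuous_on S (\<lambda>z. \<phi>' (f z))" for S f
    by (rule continuous_on_compose2[OF phic]) auto
  note gc = g_cont_comp[OF assms(2)]
  have "continuous_on UNIV (\<lambda>x. integral (cbox (-R) R) (\<lambda>y. (\<phi>' x - \<phi>' y) * (W (x - y) * g t x * g t y)))"
    by (rule integral_continuous_on_param) (simp add: split_beta, intro continuous_intros phic' gc)
  then show "(\<lambda>x. integral {-R..R} (\<lambda>y. (\<phi>' x - \<phi>' y) * (W (x - y) * g t x * g t y))) integrable_on {-R..R}"
    by (intro integrable_continuous_real) (auto simp: cbox_interval intro: continuous_on_subset)
  fix x
  show "0 \<le> integral {-R..R} (\<lambda>y. (\<phi>' x - \<phi>' y) * (W (x - y) * g t x * g t y))"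
  proof (rule integral_nonneg)
    show "(\<lambda>y. (\<phi>' x - \<phi>' y) * (W (x - y) * g t x * g t y)) integrable_on {-R..R}"
      by (intro integrable_continuous_real continuous_intros phic' gc)
    fix y
    have "0 \<le> (\<phi>' x - \<phi>' y) * W (x - y)"
    proof (cases "x \<ge> y")
      case True
      then show ?thesis using assms(1) W_sign[of "x - y"]
        by (metis diff_ge_0_iff_ge mono_def W_pos W_zero less_eq_real_def mult_nonneg_nonneg)
    next
      case False
      then show ?thesis using assms(1) W_neg[of "x - y"]
        by (simp add: mono_def mult_nonpos_nonpos)
    qed
    then show "0 \<le> (\<phi>' x - \<phi>' y) * (W (x - y) * g t x * g t y)"
      using g_nonneg[OF assms(2)] by (metis mult.assoc mult_nonneg_nonneg)
  qed
qed

lemma mono_test: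
  assumes phi: "\<And>x. (\<phi> has_real_derivative \<phi>' x) (at x)" and phic: "continuous_on UNIV \<phi>'"
    and m: "mono \<phi>'" and T: "0 \<le> T"
  shows "integral UNIV (\<lambda>x. \<phi> x * g T x) \<le> integral UNIV (\<lambda>x. \<phi> x * g 0 x)"
proof -
  obtain R where R: "R > 0" "\<forall>t x. 0 \<le> t \<and> t \<le> T \<and> \<bar>x\<bar> \<ge> R \<longrightarrow> g t x = 0"
    using decayR by blast
  have phicont: "continuous_on UNIV \<phi>"
    using phi by (meson DERIV_continuous continuous_at_imp_continuous_on)
  have "integral {-R..R} (\<lambda>x. \<phi> x * g T x) \<le> integral {-R..R} (\<lambda>x. \<phi> x * g 0 x)"
    by (rule mono_lemma[OF T core[OF T R(2) R(1) phi phic]]) (use D_nonneg[OF m _ phic] in auto)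
  then show ?thesis
    using M_box[OF _ _ R(2) phicont, of T] M_box[OF _ _ R(2) phicont, of 0] T by simp
qed

lemma const_test:
  assumes phi: "\<And>x. (\<phi> has_real_derivative c) (at x)" and T: "0 \<le> T"
  shows "integral UNIV (\<lambda>x. \<phi> x * g T x) = integral UNIV (\<lambda>x. \<phi> x * g 0 x)"
proof -
  have m: "mono (\<lambda>x::real. c)" by (simp add: mono_def)
  have m2: "mono (\<lambda>x::real. - c)" by (simp add: mono_def)
  have a: "integral UNIV (\<lambda>x. \<phi> x * g T x) \<le> integral UNIV (\<lambda>x. \<phi> x * g 0 x)"
    by (rule mono_test[OF phi _ m T]) simp
  have "integral UNIV (\<lambda>x. - \<phi> x * g T x) \<le> integral UNIV (\<lambda>x. - \<phi> x * g 0 x)"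
    by (rule mono_test[OF _ _ m2 T]) (auto intro: DERIV_minus phi)
  then show ?thesis using a by simp
qed

lemma mass_const: "0 \<le> T \<Longrightarrow> integral UNIV (g T) = integral UNIV (g 0)"
  using const_test[of "\<lambda>x. 1" 0 T] by simp

lemma moment_const: "0 \<le> T \<Longrightarrow> integral UNIV (\<lambda>x. x * g T x) = integral UNIV (\<lambda>x. x * g 0 x)"
  using const_test[of "\<lambda>x. x" 1 T] by simp

lemma zero_from_test:
  assumes phic: "continuous_on UNIV \<phi>" and pos: "\<And>x. \<phi> x \<ge> 0"
    and z: "integral UNIV (\<lambda>x. \<phi> x * g T x) \<le> 0" and T: "0 \<le> T" and px: "\<phi> x > 0"
  shows "g T x = 0"
proof -
  obtain R where R: "R > 0" "\<forall>t x. 0 \<le> t \<and> t \<le> T \<and> \<bar>x\<bar> \<ge> R \<longrightarrow> g t x = 0"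
    using decayR by blast
  show ?thesis
  proof (cases "\<bar>x\<bar> \<ge> R")
    case True then show ?thesis using R T by auto
  next
    case False
    have c: "continuous_on {-R..R} (\<lambda>x. \<phi> x * g T x)"
      by (intro continuous_intros g_cont_x T continuous_on_subset[OF phic]) auto
    have nn: "0 \<le> \<phi> x * g T x" for x using pos g_nonneg[OF T] by simp
    have "integral {-R..R} (\<lambda>x. \<phi> x * g T x) = 0"
      using z M_box[OF T order.refl R(2) phic] integral_nonneg[OF integrable_continuous_real[OF c] nn]
      by simp
    then have "\<phi> x * g T x = 0"
      by (rule zero_int_imp_zero[OF c nn _ R(1)]) (use False in simp)
    then show ?thesis using px by simp
  qed
qed

lemma support_right:
  assumes s0: "\<And>x. x > b \<Longrightarrow> g 0 x = 0" and T: "0 \<le> T" and x: "x > b"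
  shows "g T x = 0"
proof -
  define \<phi> where "\<phi> = (\<lambda>x. (max (x - b) 0)\<^sup>2)"
  have d: "(\<phi> has_real_derivative 2 * max (x - b) 0) (at x)" for x
  proof -
    have "((\<lambda>x. (max (x - b) 0)\<^sup>2) has_real_derivative 2 * max (x - b) 0 * 1) (at x)"
      by (rule DERIV_chain2[OF sqpos_deriv]) (auto intro!: derivative_eq_intros)
    then show ?thesis by (simp add: \<phi>_def)
  qed
  have dc: "continuous_on UNIV \<phi>"
    using d by (meson DERIV_continuous continuous_at_imp_continuous_on)
  have m: "mono (\<lambda>x. 2 * max (x - b) (0::real))" by (auto simp: mono_def)
  have c: "continuous_on UNIV (\<lambda>x. 2 * max (x - b) (0::real))" by (intro continuous_intros)
  have "integral UNIV (\<lambda>x. \<phi> x * g T x) \<le> integral UNIV (\<lambda>x. \<phi> x * g 0 x)"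
    by (rule mono_test[OF d c m T])
  also have "(\<lambda>x. \<phi> x * g 0 x) = (\<lambda>x. 0)"
    by (rule ext) (auto simp: \<phi>_def s0 max_def)
  finally show ?thesis
    by (intro zero_from_test[OF dc _ _ T]) (use x in \<open>auto simp: \<phi>_def\<close>)
qed

lemma support_left:
  assumes s0: "\<And>x. x < a \<Longrightarrow> g 0 x = 0" and T: "0 \<le> T" and x: "x < a"
  shows "g T x = 0"
proof -
  define \<phi> where "\<phi> = (\<lambda>x. (max (a - x) 0)\<^sup>2)"
  have d: "(\<phi> has_real_derivative - (2 * max (a - x) 0)) (at x)" for x
  proof -
    have "((\<lambda>x. (max (a - x) 0)\<^sup>2) has_real_derivative 2 * max (a - x) 0 * (-1)) (at x)"
      by (rule DERIV_chain2[OF sqpos_deriv]) (auto intro!: derivative_eq_intros)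
    then show ?thesis by (simp add: \<phi>_def)
  qed
  have dc: "continuous_on UNIV \<phi>"
    using d by (meson DERIV_continuous continuous_at_imp_continuous_on)
  have m: "mono (\<lambda>x. - (2 * max (a - x) (0::real)))" by (auto simp: mono_def)
  have c: "continuous_on UNIV (\<lambda>x. - (2 * max (a - x) (0::real)))" by (intro continuous_intros)
  have "integral UNIV (\<lambda>x. \<phi> x * g T x) \<le> integral UNIV (\<lambda>x. \<phi> x * g 0 x)"
    by (rule mono_test[OF d c m T])
  also have "(\<lambda>x. \<phi> x * g 0 x) = (\<lambda>x. 0)"
    by (rule ext) (auto simp: \<phi>_def s0 max_def)
  finally show ?thesis
    by (intro zero_from_test[OF dc _ _ T]) (use x in \<open>auto simp: \<phi>_def\<close>)
qed

lemma inertia_decay: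
  assumes kap: "\<kappa> > 0" "\<forall>z. \<bar>z\<bar> \<le> b - a \<longrightarrow> \<kappa> * z\<^sup>2 \<le> z * W z"
    and supp: "\<And>t x. t \<ge> 0 \<Longrightarrow> x \<notin> {a..b} \<Longrightarrow> g t x = 0"
    and N0: "integral UNIV (\<lambda>x. (x - c) * g 0 x) = 0"
    and T: "0 \<le> T"
  shows "integral UNIV (\<lambda>x. (x - c)\<^sup>2 * g T x)
      \<le> integral UNIV (\<lambda>x. (x - c)\<^sup>2 * g 0 x) * exp (- (2 * \<kappa> * integral UNIV (g 0)) * T)"
proof -
  define m where "m = integral UNIV (g 0)"
  define k where "k = 2 * \<kappa> * m"
  obtain R where R: "R > 0" "\<forall>t x. 0 \<le> t \<and> t \<le> T \<and> \<bar>x\<bar> \<ge> R \<longrightarrow> g t x = 0"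
    using decayR by blast
  define Q where "Q t = integral {-R..R} (\<lambda>x. (x - c)\<^sup>2 * g t x)" for t
  define D where "D t = integral {-R..R} (\<lambda>x. integral {-R..R}
      (\<lambda>y. (2 * (x - c) - 2 * (y - c)) * (W (x - y) * g t x * g t y)))" for t
  have dphi: "((\<lambda>x. (x - c)\<^sup>2) has_real_derivative 2 * (x - c)) (at x)" for x
    by (auto intro!: derivative_eq_intros)
  have dQ: "(Q has_real_derivative - (1/2) * D t) (at t within {0..T})" if t: "t \<in> {0..T}" for t
  proof -
    have cphi: "continuous_on UNIV (\<lambda>x. 2 * (x - c))" by (intro continuous_intros)
    show ?thesis unfolding Q_def[abs_def] D_def by (rule core[OF T R(2) R(1) dphi cphi t])
  qed
  have boxm: "integral {-R..R} (g t) = m" if t: "t \<in> {0..T}" for t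
    using M_box[of t T R "\<lambda>x. 1"] R t mass_const[of t] by (auto simp: m_def)
  have boxN: "integral {-R..R} (\<lambda>x. (x - c) * g t x) = 0" if t: "t \<in> {0..T}" for t
  proof -
    have "integral UNIV (\<lambda>x. (x - c) * g t x) = 0"
    proof -
      have "((\<lambda>x. x - c) has_real_derivative 1) (at x)" for x by (auto intro!: derivative_eq_intros)
      then show ?thesis using const_test[of "\<lambda>x. x - c" 1 t] t N0 by auto
    qed
    moreover have "continuous_on UNIV (\<lambda>x::real. x - c)" by (intro continuous_intros)
    ultimately show ?thesis using M_box[of t T R "\<lambda>x. x - c"] R t by auto
  qed
  have Dbound: "D t \<ge> 2 * \<kappa> * (2 * m * Q t)" if t: "t \<in> {0..T}" for t
  proof -
    have t0: "t \<ge> 0" using t by auto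
    note gc = g_cont_comp[OF t0]
    have "2 * \<kappa> * (2 * m * Q t) = 2 * \<kappa> * integral {-R..R} (\<lambda>x. integral {-R..R} (\<lambda>y. (x - y)\<^sup>2 * (g t x * g t y)))"
      using dbl_expand[OF g_cont_x[OF t0], of R c] boxm[OF t] boxN[OF t] by (simp add: Q_def)
    also have "\<dots> = integral {-R..R} (\<lambda>x. integral {-R..R} (\<lambda>y. 2 * \<kappa> * ((x - y)\<^sup>2 * (g t x * g t y))))"
      by simp
    also have "\<dots> \<le> D t"
      unfolding D_def
    proof (rule integral_le)
      have "continuous_on UNIV (\<lambda>x. integral (cbox (-R) R) (\<lambda>y. 2 * \<kappa> * ((x - y)\<^sup>2 * (g t x * g t y))))"
        by (rule integral_continuous_on_param) (simp add: split_beta, intro continuous_intros gc)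
      then show "(\<lambda>x. integral {-R..R} (\<lambda>y. 2 * \<kappa> * ((x - y)\<^sup>2 * (g t x * g t y)))) integrable_on {-R..R}"
        by (intro integrable_continuous_real) (auto simp: cbox_interval intro: continuous_on_subset)
      have "continuous_on UNIV (\<lambda>x. integral (cbox (-R) R) (\<lambda>y. (2 * (x - c) - 2 * (y - c)) * (W (x - y) * g t x * g t y)))"
        by (rule integral_continuous_on_param) (simp add: split_beta, intro continuous_intros gc)
      then show "(\<lambda>x. integral {-R..R} (\<lambda>y. (2 * (x - c) - 2 * (y - c)) * (W (x - y) * g t x * g t y))) integrable_on {-R..R}"
        by (intro integrable_continuous_real) (auto simp: cbox_interval intro: continuous_on_subset)
      fix x
      show "integral {-R..R} (\<lambda>y. 2 * \<kappa> * ((x - y)\<^sup>2 * (g t x * g t y)))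
         \<le> integral {-R..R} (\<lambda>y. (2 * (x - c) - 2 * (y - c)) * (W (x - y) * g t x * g t y))"
      proof (rule integral_le)
        show "(\<lambda>y. 2 * \<kappa> * ((x - y)\<^sup>2 * (g t x * g t y))) integrable_on {-R..R}"
          by (intro integrable_continuous_real continuous_intros gc)
        show "(\<lambda>y. (2 * (x - c) - 2 * (y - c)) * (W (x - y) * g t x * g t y)) integrable_on {-R..R}"
          by (intro integrable_continuous_real continuous_intros gc)
        fix y
        have gg: "0 \<le> g t x * g t y" using g_nonneg[OF t0] by simp
        show "2 * \<kappa> * ((x - y)\<^sup>2 * (g t x * g t y)) \<le> (2 * (x - c) - 2 * (y - c)) * (W (x - y) * g t x * g t y)"
        proof (cases "x \<in> {a..b} \<and> y \<in> {a..b}")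
          case True
          then have "\<kappa> * (x - y)\<^sup>2 \<le> (x - y) * W (x - y)" using kap(2) by auto
          then have "2 * (\<kappa> * (x - y)\<^sup>2) * (g t x * g t y) \<le> 2 * ((x - y) * W (x - y)) * (g t x * g t y)"
            using gg by (intro mult_right_mono) auto
          then show ?thesis by (simp add: algebra_simps)
        next
          case False
          then have "g t x = 0 \<or> g t y = 0" using supp[OF t0] by auto
          then show ?thesis by auto
        qed
      qed
    qed
    finally show ?thesis .
  qed
  have dJ: "((\<lambda>s. Q s * exp (k * s)) has_real_derivative
      (- (1/2) * D t) * exp (k * t) + (exp (k * t) * k) * Q t) (at t within {0..T})" if t: "t \<in> {0..T}" for t
    by (rule DERIV_mult[OF dQ[OF t]]) (auto intro!: derivative_eq_intros)
  have "Q T * exp (k * T) \<le> Q 0 * exp (k * 0)"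
  proof (rule mono_lemma[OF T dJ])
    fix t assume t: "t \<in> {0..T}"
    have "- (1/2) * D t + k * Q t \<le> 0" using Dbound[OF t] by (simp add: k_def)
    then have "exp (k * t) * (- (1/2) * D t + k * Q t) \<le> 0"
      by (simp add: mult_le_0_iff)
    then show "(- (1/2) * D t) * exp (k * t) + (exp (k * t) * k) * Q t \<le> 0"
      by (simp add: algebra_simps)
  qed
  then have "Q T \<le> Q 0 * exp (- k * T)"
    by (simp add: exp_minus field_simps)
  moreover have "Q T = integral UNIV (\<lambda>x. (x - c)\<^sup>2 * g T x)" "Q 0 = integral UNIV (\<lambda>x. (x - c)\<^sup>2 * g 0 x)"
    using M_box[of T T R "\<lambda>x. (x - c)\<^sup>2"] M_box[of 0 T R "\<lambda>x. (x - c)\<^sup>2"] R T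
      continuous_on_power[OF continuous_on_diff[OF continuous_on_id continuous_on_const[of UNIV c]], of 2]
    by (auto simp: Q_def)
  ultimately show ?thesis by (simp add: k_def m_def)
qed

end

theorem mainTheorem13:
  fixes W :: "real \<Rightarrow> real"
    and g gt gx :: "real \<Rightarrow> real \<Rightarrow> real"
    and a b :: real
  assumes W_odd: "\<And>x. W (- x) = - W x"
    and W_diff: "\<And>x. W differentiable (at x)"
    and W_C1: "continuous_on UNIV (deriv W)"
    and W'_pos: "deriv W 0 > 0"
    and W_pos: "\<And>x. x > 0 \<Longrightarrow> W x > 0"
    and g_nonneg: "\<And>t x. t \<ge> 0 \<Longrightarrow> g t x \<ge> 0"
    and g_dt: "\<And>t x. t \<ge> 0 \<Longrightarrow> ((\<lambda>s. g s x) has_real_derivative gt t x) (at t within {0..})"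
    and g_dx: "\<And>t x. t \<ge> 0 \<Longrightarrow> ((\<lambda>y. g t y) has_real_derivative gx t x) (at x)"
    and g_cont: "continuous_on ({0..} \<times> UNIV) (\<lambda>(t, x). g t x)"
    and gt_cont: "continuous_on ({0..} \<times> UNIV) (\<lambda>(t, x). gt t x)"
    and gx_cont: "continuous_on ({0..} \<times> UNIV) (\<lambda>(t, x). gx t x)"
    and g_decay: "\<And>T. \<exists>R. \<forall>t x. 0 \<le> t \<and> t \<le> T \<and> \<bar>x\<bar> > R \<longrightarrow> g t x = 0"
    and pde: "\<And>t x. t \<ge> 0 \<Longrightarrow>
               ((\<lambda>y. conv_W W (g t) y * g t y) has_real_derivative gt t x) (at x)"
    and supp0: "\<And>x. x \<notin> {a..b} \<Longrightarrow> g 0 x = 0"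
  shows "(\<forall>t>0. \<forall>x. x \<notin> {a..b} \<longrightarrow> g t x = 0)
       \<and> (\<forall>c h. integral UNIV (g 0) * c = integral UNIV (\<lambda>x. x * g 0 x)
              \<and> (\<forall>x. h differentiable (at x))
              \<and> (\<forall>x. deriv h differentiable (at x))
              \<and> continuous_on UNIV (deriv (deriv h))
            \<longrightarrow> ((\<lambda>t. integral UNIV (\<lambda>x. h x * g t x))
                   \<longlongrightarrow> integral UNIV (g 0) * h c) at_top)"
proof -
  have W_cont: "continuous_on UNIV W"
    using W_diff by (meson continuous_at_imp_continuous_on differentiable_imp_continuous_within)
  interpret agg W g gt
  proof
    show "\<And>x. W (- x) = - W x" by (rule W_odd)
  qed (use W_cont W_pos g_nonneg g_dt g_cont gt_cont g_decay pde in auto)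
  have supp: "g t x = 0" if "t \<ge> 0" "x \<notin> {a..b}" for t x
  proof -
    have r: "\<And>x. x > b \<Longrightarrow> g 0 x = 0" and l: "\<And>x. x < a \<Longrightarrow> g 0 x = 0" using supp0 by auto
    from that(2) have "x > b \<or> x < a" by auto
    then show ?thesis using support_right[OF r that(1)] support_left[OF l that(1)] by auto
  qed
  show ?thesis
  proof (intro conjI allI impI)
    fix t x assume "t > (0::real)" "x \<notin> {a..b}"
    then show "g t x = 0" using supp by auto
  next
    fix c and h :: "real \<Rightarrow> real"
    assume H: "integral UNIV (g 0) * c = integral UNIV (\<lambda>x. x * g 0 x)
              \<and> (\<forall>x. h differentiable (at x))
              \<and> (\<forall>x. deriv h differentiable (at x))
              \<and> continuous_on UNIV (deriv (deriv h))"
    define m where "m = integral UNIV (g 0)"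
    define R0 where "R0 = \<bar>a\<bar> + \<bar>b\<bar> + 1"
    have R0: "R0 > 0" by (simp add: R0_def)
    have zero_out: "g t x = 0" if "t \<ge> 0" "\<bar>x\<bar> \<ge> R0" for t x
    proof -
      have "x \<notin> {a..b}" using that(2) by (auto simp: R0_def abs_if split: if_splits)
      then show ?thesis using supp[OF that(1)] by blast
    qed
    have boxeq: "integral UNIV (\<lambda>x. \<phi> x * g t x) = integral {-R0..R0} (\<lambda>x. \<phi> x * g t x)"
      if "t \<ge> 0" "continuous_on UNIV \<phi>" for t \<phi>
      by (rule int_UNIV(2)) (use that zero_out in \<open>auto intro!: continuous_intros g_cont_x intro: continuous_on_subset\<close>)
    have mass: "integral {-R0..R0} (g t) = m" if "t \<ge> 0" for t
      using boxeq[OF that, of "\<lambda>x. 1"] mass_const[OF that] by (simp add: m_def)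
    have hc: "continuous_on UNIV h"
      using H by (meson continuous_at_imp_continuous_on differentiable_imp_continuous_within)
    have m0: "m \<ge> 0"
      using mass[of 0] integral_nonneg[OF integrable_continuous_real[OF g_cont_x[of 0]], of "-R0" R0] g_nonneg[of 0]
      by auto
    show "((\<lambda>t. integral UNIV (\<lambda>x. h x * g t x)) \<longlongrightarrow> integral UNIV (g 0) * h c) at_top"
    proof (cases "m = 0")
      case True
      have gz: "g t x = 0" if "t \<ge> 0" for t x
        by (rule zero_from_test[of "\<lambda>x. 1"]) (use that mass_const[OF that] True in \<open>auto simp: m_def\<close>)
      have "\<forall>\<^sub>F t in at_top. integral UNIV (\<lambda>x. h x * g t x) = integral UNIV (g 0) * h c"
        using eventually_ge_at_top[of "0::real"]
        by eventually_elim (use gz True in \<open>auto simp: m_def\<close>)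
      then show ?thesis by (rule tendsto_eventually)
    next
      case False
      then have mpos: "m > 0" using m0 by auto
      have ab: "a \<le> b"
      proof (rule ccontr)
        assume "\<not> a \<le> b"
        then have "g 0 = (\<lambda>x. 0)" using supp0 by auto
        then have "m = 0" by (simp add: m_def)
        then show False using mpos by simp
      qed
      have N0: "integral UNIV (\<lambda>x. (x - c) * g 0 x) = 0"
      proof -
        have c1: "continuous_on UNIV (\<lambda>x::real. x - c)" "continuous_on UNIV (\<lambda>x::real. x)"
          by (intro continuous_intros)+
        have i1: "(\<lambda>x. x * g 0 x) integrable_on {-R0..R0}" "(\<lambda>x. c * g 0 x) integrable_on {-R0..R0}"
          by (intro integrable_continuous_real continuous_intros g_cont_x; simp)+
        have "integral UNIV (\<lambda>x. (x - c) * g 0 x) = integral {-R0..R0} (\<lambda>x. x * g 0 x - c * g 0 x)"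
          using boxeq[OF order.refl c1(1)] by (simp add: algebra_simps)
        also have "\<dots> = integral {-R0..R0} (\<lambda>x. x * g 0 x) - c * m"
          using integral_diff[OF i1] mass[of 0] by simp
        also have "integral {-R0..R0} (\<lambda>x. x * g 0 x) = m * c"
          using boxeq[OF order.refl c1(2)] H by (simp add: m_def)
        finally show ?thesis by simp
      qed
      obtain \<kappa> where kap: "\<kappa> > 0" "\<forall>z. \<bar>z\<bar> \<le> b - a \<longrightarrow> \<kappa> * z\<^sup>2 \<le> z * W z"
        using kappa_lemma[OF W_odd W_diff W'_pos W_pos, of "b - a"] ab by auto
      define I where "I t = integral UNIV (\<lambda>x. (x - c)\<^sup>2 * g t x)" for t
      define k where "k = 2 * \<kappa> * m"
      have kpos: "k > 0" using kap mpos by (simp add: k_def)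
      have Idec: "I t \<le> I 0 * exp (- k * t)" if "t \<ge> 0" for t
        using inertia_decay[OF kap supp N0 that] by (simp add: I_def k_def m_def)
      obtain Mh where Mh: "Mh \<ge> 0" "\<forall>x\<in>{min a c..max b c}. \<forall>y\<in>{min a c..max b c}.
          \<bar>h x - h y - deriv h y * (x - y)\<bar> \<le> Mh * (x - y)\<^sup>2"
        using taylor_bound[of h "min a c" "max b c"] H by auto
      have est: "\<bar>integral UNIV (\<lambda>x. h x * g t x) - m * h c\<bar> \<le> Mh * I t" if t: "t \<ge> 0" for t
      proof -
        note gc = g_cont_x[OF t]
        have cN: "integral {-R0..R0} (\<lambda>x. (x - c) * g t x) = 0"
        proof -
          have d1: "((\<lambda>x. x - c) has_real_derivative 1) (at x)" for x by (auto intro!: derivative_eq_intros)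
          have "continuous_on UNIV (\<lambda>x::real. x - c)" by (intro continuous_intros)
          then show ?thesis using boxeq[OF t] const_test[OF d1 t] N0 by simp
        qed
        define E where "E x = h x - h c - deriv h c * (x - c)" for x
        have i1: "(\<lambda>x. h x * g t x) integrable_on {-R0..R0}" "(\<lambda>x. h c * g t x) integrable_on {-R0..R0}"
          "(\<lambda>x. deriv h c * ((x - c) * g t x)) integrable_on {-R0..R0}"
          by (intro integrable_continuous_real continuous_intros gc continuous_on_subset[OF hc]; simp)+
        have "integral {-R0..R0} (\<lambda>x. E x * g t x)
            = integral {-R0..R0} (\<lambda>x. h x * g t x - h c * g t x - deriv h c * ((x - c) * g t x))"
          by (rule integral_cong) (simp add: E_def algebra_simps)
        also have "\<dots> = integral {-R0..R0} (\<lambda>x. h x * g t x) - h c * m"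
          using integral_diff[OF integrable_diff[OF i1(1,2)] i1(3)] integral_diff[OF i1(1,2)] mass[OF t] cN
          by simp
        also have "integral {-R0..R0} (\<lambda>x. h x * g t x) = integral UNIV (\<lambda>x. h x * g t x)"
          using boxeq[OF t hc] by simp
        finally have eq: "integral UNIV (\<lambda>x. h x * g t x) - m * h c = integral {-R0..R0} (\<lambda>x. E x * g t x)"
          by (simp add: algebra_simps)
        have "norm (integral {-R0..R0} (\<lambda>x. E x * g t x)) \<le> integral {-R0..R0} (\<lambda>x. Mh * ((x - c)\<^sup>2 * g t x))"
        proof (rule integral_norm_bound_integral)
          show "(\<lambda>x. E x * g t x) integrable_on {-R0..R0}"
            unfolding E_def by (intro integrable_continuous_real continuous_intros gc continuous_on_subset[OF hc]; simp)
          show "(\<lambda>x. Mh * ((x - c)\<^sup>2 * g t x)) integrable_on {-R0..R0}"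
            by (intro integrable_continuous_real continuous_intros gc)
          fix x
          show "norm (E x * g t x) \<le> Mh * ((x - c)\<^sup>2 * g t x)"
          proof (cases "x \<in> {a..b}")
            case True
            have "x \<in> {min a c..max b c}" "c \<in> {min a c..max b c}" using True by auto
            then have "\<bar>E x\<bar> \<le> Mh * (x - c)\<^sup>2" using Mh(2) unfolding E_def by blast
            then have "\<bar>E x\<bar> * g t x \<le> Mh * (x - c)\<^sup>2 * g t x"
              using g_nonneg[OF t] by (intro mult_right_mono) auto
            then show ?thesis using g_nonneg[OF t, of x] by (simp add: abs_mult mult.assoc)
          next
            case False then show ?thesis using supp[OF t False] by simp
          qed
        qed
        also have "\<dots> = Mh * I t"
        proof -
          have "continuous_on UNIV (\<lambda>x::real. (x - c)\<^sup>2)" by (intro continuous_intros)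
          then show ?thesis using boxeq[OF t, of "\<lambda>x. (x - c)\<^sup>2"] by (simp add: I_def)
        qed
        finally show ?thesis using eq by simp
      qed
      have "((\<lambda>t. integral UNIV (\<lambda>x. h x * g t x) - m * h c) \<longlongrightarrow> 0) at_top"
      proof (rule Lim_null_comparison)
        show "\<forall>\<^sub>F t in at_top. norm (integral UNIV (\<lambda>x. h x * g t x) - m * h c) \<le> Mh * I 0 * exp (- k * t)"
          using eventually_ge_at_top[of "0::real"]
        proof eventually_elim
          case (elim t)
          have "Mh * I t \<le> Mh * (I 0 * exp (- k * t))"
            using Idec[OF elim] Mh(1) by (intro mult_left_mono) auto
          then show ?case using est[OF elim] by simp
        qed
        show "((\<lambda>t. Mh * I 0 * exp (- k * t)) \<longlongrightarrow> 0) at_top"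
          using kpos by real_asymp
      qed
      then show ?thesis by (simp add: LIM_zero_iff m_def)
    qed
  qed
qed

end
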